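(* Let $G$ be a countably infinite structure in a finite relational language. Then $G$ is strongly online categorical if and only if $G$ is homogeneous. Moreover, the "only if" direction holds even if, in the definition of strong online categoricity, the function $F$ is only required to be total (not necessarily primitive recursive or even computable).
   Context: A presentation of $G$ is a structure with domain $\mathbb{N}$ isomorphic to $G$. For a presentation $\alpha$ and $m\in\mathbb{N}$, $\alpha\upharpoonright m$ denotes the finite string coding the atomic diagram of the substructure of $\alpha$ on $\{0,\dots,m-1\}$. $G$ is strongly online categorical if there is a primitive recursive function $F$ such that for all presentations $\alpha,\beta$ of $G$, the map $i\mapsto F(\alpha\upharpoonright(i+1),\beta\upharpoonright(i+1),i)$ is an isomorphism from $\alpha$ onto $\beta$ (so the image of element $i$ is determined from the substructures of both presentations on $\{0,\dots,i\}$, and lies in $\{0,\dots,i\}$). $G$ is homogeneous (in the sense of this paper) if for every finite tuple $\bar x$ of elements of $G$ and every pair of elements $y,z$ of $G$ not occurring in $\bar x$, there is an automorphism of $G$ fixing $\bar x$ pointwise and mapping $y$ to $z$. *)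

theory Defs
  imports Main "HOL-Library.Countable_Set" "HOL-Library.Nat_Bijection"
begin

text \<open>A function on argument lists; only its values on lists of length n matter.\<close>
inductive prim_rec :: "nat \<Rightarrow> (nat list \<Rightarrow> nat) \<Rightarrow> bool" where
  pr_zero: "prim_rec n (\<lambda>_. 0)"
| pr_succ: "prim_rec 1 (\<lambda>xs. Suc (hd xs))"
| pr_proj: "i < n \<Longrightarrow> prim_rec n (\<lambda>xs. xs ! i)"
| pr_comp: "prim_rec m g \<Longrightarrow> length fs = m \<Longrightarrow> (\<forall>f\<in>set fs. prim_rec n f)
            \<Longrightarrow> prim_rec n (\<lambda>xs. g (map (\<lambda>f. f xs) fs))"
| pr_rec: "prim_rec n g \<Longrightarrow> prim_rec (Suc (Suc n)) h
           \<Longrightarrow> prim_rec (Suc n) (\<lambda>xs. rec_nat (g (tl xs)) (\<lambda>y r. h (y # r # tl xs)) (hd xs))"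
| pr_ext: "prim_rec n f \<Longrightarrow> (\<forall>xs. length xs = n \<longrightarrow> f xs = f' xs) \<Longrightarrow> prim_rec n f'"

definition prim_rec3 :: "(nat \<Rightarrow> nat \<Rightarrow> nat \<Rightarrow> nat) \<Rightarrow> bool" where
  "prim_rec3 F \<longleftrightarrow> prim_rec 3 (\<lambda>xs. F (xs ! 0) (xs ! 1) (xs ! 2))"

text \<open>A finite relational language is a list ar of arities: symbol i (i < length ar) has
  arity ar ! i. A structure with carrier A interprets symbol i by R i, a predicate on
  tuples (lists) of length ar ! i.\<close>

definition automorphism :: "nat list \<Rightarrow> 'a set \<Rightarrow> (nat \<Rightarrow> 'a list \<Rightarrow> bool) \<Rightarrow> ('a \<Rightarrow> 'a) \<Rightarrow> bool" where
  "automorphism ar A R h \<longleftrightarrow> bij_betw h A A \<and>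
     (\<forall>i < length ar. \<forall>xs. set xs \<subseteq> A \<longrightarrow> length xs = ar ! i \<longrightarrow> (R i (map h xs) \<longleftrightarrow> R i xs))"

definition homogeneous :: "nat list \<Rightarrow> 'a set \<Rightarrow> (nat \<Rightarrow> 'a list \<Rightarrow> bool) \<Rightarrow> bool" where
  "homogeneous ar A R \<longleftrightarrow>
     (\<forall>xs y z. set xs \<subseteq> A \<longrightarrow> y \<in> A \<longrightarrow> z \<in> A \<longrightarrow> y \<notin> set xs \<longrightarrow> z \<notin> set xs \<longrightarrow>
        (\<exists>h. automorphism ar A R h \<and> (\<forall>x\<in>set xs. h x = x) \<and> h y = z))"

definition presentation :: "nat list \<Rightarrow> 'a set \<Rightarrow> (nat \<Rightarrow> 'a list \<Rightarrow> bool) \<Rightarrow> (nat \<Rightarrow> nat list \<Rightarrow> bool) \<Rightarrow> bool" where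
  "presentation ar A R P \<longleftrightarrow> (\<exists>f. bij_betw f UNIV A \<and>
     (\<forall>i < length ar. \<forall>xs. length xs = ar ! i \<longrightarrow> (P i xs \<longleftrightarrow> R i (map f xs))))"

definition nat_iso :: "nat list \<Rightarrow> (nat \<Rightarrow> nat list \<Rightarrow> bool) \<Rightarrow> (nat \<Rightarrow> nat list \<Rightarrow> bool) \<Rightarrow> (nat \<Rightarrow> nat) \<Rightarrow> bool" where
  "nat_iso ar P Q g \<longleftrightarrow> bij g \<and>
     (\<forall>i < length ar. \<forall>xs. length xs = ar ! i \<longrightarrow> (P i xs \<longleftrightarrow> Q i (map g xs)))"

text \<open>Code (a natural number) of the atomic diagram of the substructure on {0..<m}:
  for each symbol i and each tuple over {0..<m} of length ar ! i (in the canonical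
  enumeration n_lists), one bit; the bit string is coded via list_encode.\<close>
definition diag_code :: "nat list \<Rightarrow> (nat \<Rightarrow> nat list \<Rightarrow> bool) \<Rightarrow> nat \<Rightarrow> nat" where
  "diag_code ar P m = list_encode (concat (map (\<lambda>i. map (\<lambda>xs. if P i xs then 1 else 0)
       (List.n_lists (ar ! i) [0..<m])) [0..<length ar]))"

definition online_iso_witness :: "nat list \<Rightarrow> 'a set \<Rightarrow> (nat \<Rightarrow> 'a list \<Rightarrow> bool) \<Rightarrow> (nat \<Rightarrow> nat \<Rightarrow> nat \<Rightarrow> nat) \<Rightarrow> bool" where
  "online_iso_witness ar A R F \<longleftrightarrow>
     (\<forall>P Q. presentation ar A R P \<longrightarrow> presentation ar A R Q \<longrightarrow>
        (\<forall>i. F (diag_code ar P (Suc i)) (diag_code ar Q (Suc i)) i \<le> i) \<and>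
        nat_iso ar P Q (\<lambda>i. F (diag_code ar P (Suc i)) (diag_code ar Q (Suc i)) i))"

definition strongly_online_categorical :: "nat list \<Rightarrow> 'a set \<Rightarrow> (nat \<Rightarrow> 'a list \<Rightarrow> bool) \<Rightarrow> bool" where
  "strongly_online_categorical ar A R \<longleftrightarrow> (\<exists>F. prim_rec3 F \<and> online_iso_witness ar A R F)"

definition total_online_categorical :: "nat list \<Rightarrow> 'a set \<Rightarrow> (nat \<Rightarrow> 'a list \<Rightarrow> bool) \<Rightarrow> bool" where
  "total_online_categorical ar A R \<longleftrightarrow> (\<exists>F. online_iso_witness ar A R F)"

end

theory Submission
  imports Defs
begin

lemma prefix_bij:
  assumes "countable A" "infinite A" "distinct ls" "set ls \<subseteq> A"
  shows "\<exists>f. bij_betw f UNIV A \<and> (\<forall>i<length ls. f i = ls ! i)"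
proof -
  let ?B = "A - set ls"
  have "countable ?B" using assms by auto
  moreover have "infinite ?B" using assms by auto
  ultimately obtain g where g: "bij_betw g (UNIV :: nat set) ?B" by (rule countable_infiniteE')
  define n where "n = length ls"
  define f where "f i = (if i < n then ls ! i else g (i - n))" for i
  have "inj f"
  proof (rule injI)
    fix i j assume e: "f i = f j"
    show "i = j"
    proof (cases "i < n"; cases "j < n")
      assume "i < n" "j < n" then show ?thesis using e assms(3) by (simp add: f_def n_def nth_eq_iff_index_eq)
    next
      assume a: "i < n" "\<not> j < n"
      then have "f i \<in> set ls" "f j \<in> ?B" using g by (auto simp: f_def n_def bij_betw_def)
      then show ?thesis using e by auto
    next
      assume a: "\<not> i < n" "j < n"
      then have "f j \<in> set ls" "f i \<in> ?B" using g by (auto simp: f_def n_def bij_betw_def)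
      then show ?thesis using e by auto
    next
      assume a: "\<not> i < n" "\<not> j < n"
      then have "g (i - n) = g (j - n)" using e by (simp add: f_def)
      then have "i - n = j - n" using g by (simp add: bij_betw_def inj_def)
      then show ?thesis using a by simp
    qed
  qed
  moreover have "range f = A"
  proof
    show "range f \<subseteq> A" using g assms(4) by (auto simp: f_def n_def bij_betw_def)
  next
    show "A \<subseteq> range f"
    proof
      fix a assume a: "a \<in> A"
      show "a \<in> range f"
      proof (cases "a \<in> set ls")
        case True
        then obtain i where "i < n" "ls ! i = a" by (auto simp: in_set_conv_nth n_def)
        then show ?thesis by (metis f_def rangeI)
      next
        case False
        then have "a \<in> g ` UNIV" using a g by (auto simp: bij_betw_def)
        then obtain k where "a = g k" by auto
        then have "f (k + n) = a" by (simp add: f_def)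
        then show ?thesis by (metis rangeI)
      qed
    qed
  qed
  moreover have "\<forall>i<length ls. f i = ls ! i" by (simp add: f_def n_def)
  ultimately show ?thesis unfolding bij_betw_def by blast
qed

lemma id_auto: "automorphism ar A R id"
  by (simp add: automorphism_def)

lemma comp_auto:
  assumes "automorphism ar A R h" "automorphism ar A R g"
  shows "automorphism ar A R (h \<circ> g)"
  unfolding automorphism_def
proof (intro conjI allI impI)
  show "bij_betw (h \<circ> g) A A" using assms bij_betw_trans by (auto simp: automorphism_def)
next
  fix i xs assume i: "i < length ar" and s: "set xs \<subseteq> A" and l: "length xs = ar ! i"
  have s2: "set (map g xs) \<subseteq> A" using assms(2) s by (auto simp: automorphism_def bij_betw_def)
  have "R i (map (h \<circ> g) xs) = R i (map h (map g xs))" by simp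
  also have "\<dots> = R i (map g xs)" using assms(1) i s2 l unfolding automorphism_def by (metis length_map)
  also have "\<dots> = R i xs" using assms(2) i s l by (simp add: automorphism_def)
  finally show "R i (map (h \<circ> g) xs) = R i xs" .
qed

lemma extend_auto:
  assumes hom: "homogeneous ar A R"
  shows "length us = length vs \<Longrightarrow> distinct us \<Longrightarrow> distinct vs \<Longrightarrow> set us \<subseteq> A \<Longrightarrow> set vs \<subseteq> A
     \<Longrightarrow> \<exists>h. automorphism ar A R h \<and> map h us = vs"
proof (induction us arbitrary: vs rule: rev_induct)
  case Nil then show ?case using id_auto by auto
next
  case (snoc u us)
  then obtain vs' v where vs: "vs = vs' @ [v]" by (metis length_Suc_conv_rev length_append_singleton)
  with snoc obtain g where g: "automorphism ar A R g" "map g us = vs'" by auto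
  have gu: "g u \<in> A" using g(1) snoc.prems by (auto simp: automorphism_def bij_betw_def)
  have "g u \<notin> set vs'"
  proof
    assume "g u \<in> set vs'"
    then obtain w where w: "w \<in> set us" "g w = g u" using g(2) by auto
    then have "w = u" using g(1) snoc.prems by (auto simp: automorphism_def bij_betw_def inj_on_def)
    then show False using w snoc.prems by auto
  qed
  moreover have "v \<notin> set vs'" "v \<in> A" "set vs' \<subseteq> A" using snoc.prems vs by auto
  ultimately obtain h2 where h2: "automorphism ar A R h2" "\<forall>x\<in>set vs'. h2 x = x" "h2 (g u) = v"
    using hom gu unfolding homogeneous_def by blast
  have "map (h2 \<circ> g) (us @ [u]) = vs"
    using g(2) h2 vs by (auto simp: map_idI)
  then show ?case using comp_auto[OF h2(1) g(1)] by blast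
qed

lemma hom_online:
  assumes hom: "homogeneous ar A R"
  shows "online_iso_witness ar A R (\<lambda>a b i. i)"
  unfolding online_iso_witness_def
proof (intro allI impI)
  fix P Q assume P: "presentation ar A R P" and Q: "presentation ar A R Q"
  show "(\<forall>i. (\<lambda>a b i. i) (diag_code ar P (Suc i)) (diag_code ar Q (Suc i)) i \<le> i) \<and>
        nat_iso ar P Q (\<lambda>i. (\<lambda>a b i. i) (diag_code ar P (Suc i)) (diag_code ar Q (Suc i)) i)"
  proof (intro conjI)
  show "\<forall>i. (\<lambda>a b i. i) (diag_code ar P (Suc i)) (diag_code ar Q (Suc i)) i \<le> i" by simp
  obtain f where f: "bij_betw f UNIV A" "\<forall>i < length ar. \<forall>xs. length xs = ar ! i \<longrightarrow> (P i xs \<longleftrightarrow> R i (map f xs))"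
    using P by (auto simp: presentation_def)
  obtain g where g: "bij_betw g UNIV A" "\<forall>i < length ar. \<forall>xs. length xs = ar ! i \<longrightarrow> (Q i xs \<longleftrightarrow> R i (map g xs))"
    using Q by (auto simp: presentation_def)
  show "nat_iso ar P Q (\<lambda>i. i)"
    unfolding nat_iso_def
  proof (intro conjI allI impI)
    show "bij (\<lambda>i. i)" by (simp add: bij_def)
  next
    fix i and xs :: "nat list" assume i: "i < length ar" and l: "length xs = ar ! i"
    define ds :: "nat list" where "ds = remdups xs"
    have "distinct (map f ds)" using f(1) by (simp add: ds_def distinct_map bij_betw_def inj_on_def)
    moreover have "distinct (map g ds)" using g(1) by (simp add: ds_def distinct_map bij_betw_def inj_on_def)
    moreover have "set (map f ds) \<subseteq> A" "set (map g ds) \<subseteq> A" using f(1) g(1) by (auto simp: bij_betw_def)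
    ultimately obtain h where h: "automorphism ar A R h" "map h (map f ds) = map g ds"
      using extend_auto[OF hom, of "map f ds" "map g ds"] by auto
    have hx: "map h (map f xs) = map g xs"
    proof -
      have "\<forall>x\<in>set xs. h (f x) = g x" using h(2) by (auto simp: ds_def)
      then show ?thesis by simp
    qed
    have sA: "set (map f xs) \<subseteq> A" using f(1) by (auto simp: bij_betw_def)
    have "P i xs = R i (map f xs)" using f(2) i l by simp
    also have "\<dots> = R i (map h (map f xs))" using h(1) i l sA unfolding automorphism_def by (metis length_map)
    also have "\<dots> = Q i xs" using g(2) i l hx by metis
    finally show "P i xs = Q i (map (\<lambda>i. i) xs)" by simp
  qed
  qed
qed

lemma le_inj_id:
  fixes \<sigma> :: "nat \<Rightarrow> nat"
  assumes "inj \<sigma>" "\<forall>i. \<sigma> i \<le> i"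
  shows "\<sigma> i = i"
proof (induction i rule: less_induct)
  case (less i)
  show ?case
  proof (rule ccontr)
    assume "\<sigma> i \<noteq> i"
    then have "\<sigma> i < i" using assms(2) le_neq_implies_less by blast
    then have "\<sigma> (\<sigma> i) = \<sigma> i" using less by blast
    then have "\<sigma> i = i" using assms(1) by (simp add: inj_eq)
    then show False using \<open>\<sigma> i \<noteq> i\<close> by simp
  qed
qed

lemma online_hom:
  assumes cA: "countable A" and iA: "infinite A" and W: "online_iso_witness ar A R F"
  shows "homogeneous ar A R"
  unfolding homogeneous_def
proof (intro allI impI)
  fix xs y z assume xs: "set xs \<subseteq> A" and y: "y \<in> A" and z: "z \<in> A" and yn: "y \<notin> set xs" and zn: "z \<notin> set xs"
  define ws where "ws = remdups xs"
  define n where "n = length ws"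
  obtain f1 where f1: "bij_betw f1 UNIV A" "\<forall>i<length (ws @ [y]). f1 i = (ws @ [y]) ! i"
    using prefix_bij[OF cA iA, of "ws @ [y]"] xs y yn by (auto simp: ws_def)
  obtain f2 where f2: "bij_betw f2 UNIV A" "\<forall>i<length (ws @ [z]). f2 i = (ws @ [z]) ! i"
    using prefix_bij[OF cA iA, of "ws @ [z]"] xs z zn by (auto simp: ws_def)
  define P where "P = (\<lambda>i l. R i (map f1 l))"
  define Q where "Q = (\<lambda>i l. R i (map f2 l))"
  have "presentation ar A R P" using f1 by (auto simp: presentation_def P_def)
  moreover have "presentation ar A R Q" using f2 by (auto simp: presentation_def Q_def)
  ultimately have w: "(\<forall>i. F (diag_code ar P (Suc i)) (diag_code ar Q (Suc i)) i \<le> i) \<and>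
        nat_iso ar P Q (\<lambda>i. F (diag_code ar P (Suc i)) (diag_code ar Q (Suc i)) i)"
    using W unfolding online_iso_witness_def by blast
  define \<sigma> where "\<sigma> = (\<lambda>i. F (diag_code ar P (Suc i)) (diag_code ar Q (Suc i)) i)"
  have "inj \<sigma>" using w by (simp add: \<sigma>_def nat_iso_def bij_def)
  then have sid: "\<sigma> = id" using le_inj_id[of \<sigma>] w unfolding \<sigma>_def by auto
  have ni: "nat_iso ar P Q \<sigma>" using w by (simp add: \<sigma>_def)
  then have iso: "\<forall>i < length ar. \<forall>l. length l = ar ! i \<longrightarrow> (R i (map f1 l) \<longleftrightarrow> R i (map f2 l))"
    unfolding sid by (simp add: nat_iso_def P_def Q_def)
  define h where "h = f2 \<circ> inv_into UNIV f1"
  have bh: "bij_betw h A A" unfolding h_def using f1(1) f2(1) bij_betw_inv_into bij_betw_trans by blast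
  have auto: "automorphism ar A R h"
    unfolding automorphism_def
  proof (intro conjI allI impI bh)
    fix i ts assume i: "i < length ar" and s: "set ts \<subseteq> A" and l: "length ts = ar ! i"
    define ls where "ls = map (inv_into UNIV f1) ts"
    have "map f1 ls = ts" using s f1(1) by (auto simp: ls_def bij_betw_def f_inv_into_f intro!: map_idI)
    moreover have "map f2 ls = map h ts" by (simp add: ls_def h_def)
    moreover have "length ls = ar ! i" using l by (simp add: ls_def)
    ultimately show "R i (map h ts) = R i ts" using iso i by metis
  qed
  have inv1: "inv_into UNIV f1 (f1 j) = j" for j using f1(1) by (simp add: bij_betw_def)
  have fixp: "\<forall>x\<in>set xs. h x = x"
  proof
    fix x assume "x \<in> set xs"
    then have "x \<in> set ws" by (simp add: ws_def)
    then obtain j where j: "j < n" "ws ! j = x" by (auto simp: n_def in_set_conv_nth)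
    then have "f1 j = x" "f2 j = x" using f1(2) f2(2) by (auto simp: n_def nth_append)
    then show "h x = x" using inv1 by (metis comp_apply h_def)
  qed
  have "f1 n = y" "f2 n = z" using f1(2) f2(2) by (auto simp: n_def)
  then have "h y = z" using inv1 by (metis comp_apply h_def)
  then show "\<exists>h. automorphism ar A R h \<and> (\<forall>x\<in>set xs. h x = x) \<and> h y = z" using auto fixp by blast
qed

theorem mainTheorem3:
  fixes ar :: "nat list" and A :: "'a set" and R :: "nat \<Rightarrow> 'a list \<Rightarrow> bool"
  assumes "countable A" and "infinite A"
  shows "(strongly_online_categorical ar A R \<longleftrightarrow> homogeneous ar A R) \<and>
         (total_online_categorical ar A R \<longrightarrow> homogeneous ar A R)"
proof -
  have pr: "prim_rec3 (\<lambda>a b i. i)"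
    unfolding prim_rec3_def by (rule pr_proj[of 2 3, simplified])
  show ?thesis
    using online_hom[OF assms] hom_online pr
    unfolding strongly_online_categorical_def total_online_categorical_def by blast
qed

end
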